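(* Fix a distribution of $(X,Y)$ on $\mathcal{X}\times\{0,1\}$ with expectation $\mathbb{E}$, let $\mathcal{L}(F,y)=-[y\log\mu(F)+(1-y)\log(1-\mu(F))]$ be the log loss with $\mu(F)=1/(1+e^{-F})$, let $\mathcal{H}$ be a set of group membership functions $h:\mathcal{X}\to\{0,1\}$, let $F_T:\mathcal{X}\to\mathbb{R}$ be a logit predictor with $f_T=\mu\circ F_T$, and let $h_1,\dots,h_K:\mathcal{X}\times[0,1]\to\mathbb{R}$ be weak learners such that for every $h\in\mathcal{H}$ and $g\in\mathcal{G}$ the function $(x,v)\mapsto h(x)g(v)$ is among $h_1,\dots,h_K$. Let $\alpha\ge0$ and suppose that $\big|\mathbb{E}[h(X)g(f_T(X))(Y-f_T(X))]\big|\ge\alpha\sqrt{\mathbb{E}[h(X)f_T(X)(1-f_T(X))]}$ for some $h\in\mathcal{H}$ and $g\in\mathcal{G}$. Then there exists $\tilde w\in\mathbb{R}^K$ such that, with $\tilde h(x)=\sum_{k=1}^K\tilde w_k h_k(x,f_T(x))$, $$\alpha\le\frac{2}{\sqrt3}\,C_T\sqrt{\mathbb{E}[\mathcal{L}(F_T(X),Y)]-\mathbb{E}[\mathcal{L}(F_T(X)+\tilde h(X),Y)]},$$ where $C_T^2=\max_{h\in\mathcal{H},g\in\mathcal{G}}\frac{\mathbb{E}[g(f_T(X))\mid h(X)=1]}{\mathbb{E}[f_T(X)(1-f_T(X))\mid h(X)=1]}$.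
   Context: $\mathcal{G}$ is the set of interval membership functions $g:[0,1]\to\{0,1\}$, $g(v)=\mathbb{1}_I(v)$ for an interval $I\subseteq[0,1]$. *)

theory Defs
  imports "HOL-Probability.Probability"
begin

definition sigmoid :: "real \<Rightarrow> real" where
  "sigmoid F = 1 / (1 + exp (- F))"

definition logloss :: "real \<Rightarrow> real \<Rightarrow> real" where
  "logloss F y = - (y * ln (sigmoid F) + (1 - y) * ln (1 - sigmoid F))"

definition interval_funs :: "(real \<Rightarrow> real) set" where
  "interval_funs = {g. \<exists>I. is_interval I \<and> I \<subseteq> {0..1} \<and> g = indicator I}"

text \<open>Conditional expectation E[phi(X,Y) | h(X) = 1] for a 0/1-valued h.\<close>
definition cond_exp_on :: "('a \<times> bool) measure \<Rightarrow> ('a \<Rightarrow> real) \<Rightarrow> ('a \<times> bool \<Rightarrow> real) \<Rightarrow> real" where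
  "cond_exp_on M h \<phi> = (\<integral>z. h (fst z) * \<phi> z \<partial>M) / (\<integral>z. h (fst z) \<partial>M)"

end

theory Submission
  imports Defs
begin

lemma hoeff2:
  fixes a p :: real assumes "0 \<le> p" "p \<le> 1"
  shows "ln (1 + p * (exp a - 1)) \<le> a * p + a\<^sup>2 / 8"
proof (cases "a \<ge> 0")
  case True
  from Hoeffdings_lemma_aux[OF True assms(1)] show ?thesis by simp
next
  case False
  have q: "0 \<le> 1 - p" using assms by simp
  have "-a \<ge> 0" using False by simp
  from Hoeffdings_lemma_aux[OF this q]
  have *: "a * (1 - p) + ln (1 + (1 - p) * (exp (-a) - 1)) \<le> a\<^sup>2 / 8" by simp
  have pos: "1 + (1 - p) * (exp (-a) - 1) > 0"
    using q False by (intro add_pos_nonneg mult_nonneg_nonneg) auto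
  have eq: "1 + p * (exp a - 1) = exp a * (1 + (1 - p) * (exp (-a) - 1))"
    by (simp add: algebra_simps exp_minus_inverse)
  have "ln (1 + p * (exp a - 1)) = a + ln (1 + (1 - p) * (exp (-a) - 1))"
    unfolding eq using pos by (simp add: ln_mult)
  with * show ?thesis by (simp add: algebra_simps)
qed

lemma logloss_alt:
  fixes y G :: real assumes "y \<in> {0,1}"
  shows "logloss G y = ln (1 + exp G) - y * G"
proof -
  have s: "sigmoid G = exp G / (1 + exp G)"
  proof -
    have e: "(1 + exp (-G)) * exp G = 1 + exp G" by (simp add: distrib_right exp_minus_inverse[of G] mult.commute[of "exp (-G)"])
    have "0 < 1 + exp (-G)" "0 < exp G" by (auto simp: add_pos_pos)
    then show ?thesis unfolding sigmoid_def using e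
      by (metis add_pos_pos exp_gt_zero zero_less_one frac_eq_eq mult_1 mult.commute less_irrefl)
  qed
  have s1: "1 - sigmoid G = 1 / (1 + exp G)"
  proof -
    have "0 < 1 + exp G" by (simp add: add_pos_pos)
    then have "(1 + exp G) / (1 + exp G) = 1" by simp
    then show ?thesis unfolding s by (simp add: diff_divide_distrib[symmetric] add_divide_distrib[symmetric] field_simps)
  qed
  have p: "0 < 1 + exp G" by (simp add: add_pos_pos)
  have l1: "ln (sigmoid G) = G - ln (1 + exp G)" unfolding s using p by (simp add: ln_div)
  have l2: "ln (1 - sigmoid G) = - ln (1 + exp G)" unfolding s1 using p by (simp add: ln_div)
  show ?thesis using assms unfolding logloss_def l1 l2 by auto
qed

lemma sigmoid_bounds: "0 < sigmoid G" "sigmoid G < 1"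
  unfolding sigmoid_def by (auto simp: add_pos_pos)

lemma logloss_nonneg:
  fixes y G :: real assumes "y \<in> {0,1}"
  shows "0 \<le> logloss G y"
  using assms sigmoid_bounds[of G] unfolding logloss_def by auto

lemma logloss_bound:
  fixes y G a :: real assumes "y \<in> {0,1}"
  shows "logloss (G + a) y \<le> logloss G y - a * (y - sigmoid G) + a\<^sup>2 / 8"
proof -
  have s: "sigmoid G = exp G / (1 + exp G)"
  proof -
    have e: "(1 + exp (-G)) * exp G = 1 + exp G" by (simp add: distrib_right exp_minus_inverse[of G] mult.commute[of "exp (-G)"])
    have "0 < 1 + exp (-G)" "0 < exp G" by (auto simp: add_pos_pos)
    then show ?thesis unfolding sigmoid_def using e
      by (metis add_pos_pos exp_gt_zero zero_less_one frac_eq_eq mult_1 mult.commute less_irrefl)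
  qed
  have p: "0 < 1 + exp G" by (simp add: add_pos_pos)
  have eq: "1 + exp (G + a) = (1 + exp G) * (1 + sigmoid G * (exp a - 1))"
    unfolding s using p by (simp add: field_simps exp_add)
  have pos: "0 < 1 + sigmoid G * (exp a - 1)"
    using eq p by (metis exp_gt_zero add_pos_pos zero_less_one zero_less_mult_pos)
  have "ln (1 + exp (G + a)) = ln (1 + exp G) + ln (1 + sigmoid G * (exp a - 1))"
    unfolding eq using p pos by (simp add: ln_mult)
  moreover have "ln (1 + sigmoid G * (exp a - 1)) \<le> a * sigmoid G + a\<^sup>2 / 8"
    using sigmoid_bounds[of G] by (intro hoeff2) auto
  ultimately show ?thesis using assms by (simp add: logloss_alt algebra_simps)
qed

theorem lemmaA4:
  fixes M :: "('a \<times> bool) measure"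
    and H :: "('a \<Rightarrow> real) set"
    and F :: "'a \<Rightarrow> real"
    and K :: nat
    and hk :: "nat \<Rightarrow> 'a \<times> real \<Rightarrow> real"
    and \<alpha> C :: real
  assumes M: "prob_space M"
    and Y_meas: "snd \<in> measurable M (count_space UNIV)"
    and F_meas: "(\<lambda>z. F (fst z)) \<in> borel_measurable M"
    and H_01: "\<forall>h\<in>H. \<forall>x. h x \<in> {0, 1}"
    and H_meas: "\<forall>h\<in>H. (\<lambda>z. h (fst z)) \<in> borel_measurable M"
    and H_pos: "\<forall>h\<in>H. (\<integral>z. h (fst z) \<partial>M) > 0"
    and loss_int: "integrable M (\<lambda>z. logloss (F (fst z)) (of_bool (snd z)))"
    and learners: "\<forall>h\<in>H. \<forall>g\<in>interval_funs. \<exists>k<K.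
                     \<forall>x. \<forall>v\<in>{0..1}. hk k (x, v) = h x * g v"
    and \<alpha>_nonneg: "\<alpha> \<ge> 0"
    and viol: "\<exists>h\<in>H. \<exists>g\<in>interval_funs.
        \<bar>\<integral>z. h (fst z) * g (sigmoid (F (fst z))) * (of_bool (snd z) - sigmoid (F (fst z))) \<partial>M\<bar>
          \<ge> \<alpha> * sqrt (\<integral>z. h (fst z) * sigmoid (F (fst z)) * (1 - sigmoid (F (fst z))) \<partial>M)"
    and C_nonneg: "C \<ge> 0"
    and C_attained: "\<exists>h\<in>H. \<exists>g\<in>interval_funs.
        C\<^sup>2 = cond_exp_on M h (\<lambda>z. g (sigmoid (F (fst z))))
               / cond_exp_on M h (\<lambda>z. sigmoid (F (fst z)) * (1 - sigmoid (F (fst z))))"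
    and C_max: "\<forall>h\<in>H. \<forall>g\<in>interval_funs.
        cond_exp_on M h (\<lambda>z. g (sigmoid (F (fst z))))
          / cond_exp_on M h (\<lambda>z. sigmoid (F (fst z)) * (1 - sigmoid (F (fst z)))) \<le> C\<^sup>2"
  shows "\<exists>w :: nat \<Rightarrow> real.
     integrable M (\<lambda>z. logloss (F (fst z) + (\<Sum>k<K. w k * hk k (fst z, sigmoid (F (fst z)))))
                               (of_bool (snd z))) \<and>
     \<alpha> \<le> 2 / sqrt 3 * C *
       sqrt ((\<integral>z. logloss (F (fst z)) (of_bool (snd z)) \<partial>M)
           - (\<integral>z. logloss (F (fst z) + (\<Sum>k<K. w k * hk k (fst z, sigmoid (F (fst z)))))
                          (of_bool (snd z)) \<partial>M))"
proof -
  interpret prob_space M using M .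
  from viol obtain h g where hH: "h \<in> H" and gG: "g \<in> interval_funs" and
    V: "\<bar>\<integral>z. h (fst z) * g (sigmoid (F (fst z))) * (of_bool (snd z) - sigmoid (F (fst z))) \<partial>M\<bar>
          \<ge> \<alpha> * sqrt (\<integral>z. h (fst z) * sigmoid (F (fst z)) * (1 - sigmoid (F (fst z))) \<partial>M)"
    by blast
  from gG obtain I where I: "is_interval I" and gI: "g = indicator I"
    unfolding interval_funs_def by blast
  from learners hH gG obtain k where kK: "k < K" and
    hk_eq: "\<forall>x. \<forall>v\<in>{0..1}. hk k (x, v) = h x * g v" by blast
  define p where "p = (\<lambda>z::'a \<times> bool. sigmoid (F (fst z)))"
  define y where "y = (\<lambda>z::'a \<times> bool. of_bool (snd z) :: real)"
  define u where "u = (\<lambda>z. h (fst z) * g (p z))"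
  define hh where "hh = (\<lambda>z::'a \<times> bool. h (fst z))"
  have h01: "\<And>x. h x \<in> {0,1}" using H_01 hH by blast
  have g01: "\<And>v. g v \<in> {0,1}" unfolding gI by (simp add: indicator_def)
  have u01: "\<And>z. u z \<in> {0,1}" unfolding u_def using h01 g01 by (metis insert_iff mult_1 mult_zero_left singletonD)
  have y01: "\<And>z. y z \<in> {0,1}" unfolding y_def by simp
  have hh01: "\<And>z. hh z \<in> {0,1}" unfolding hh_def using h01 by simp
  have p01: "\<And>z. 0 < p z \<and> p z < 1" unfolding p_def using sigmoid_bounds by auto
  note F_meas[measurable]
  have hhm[measurable]: "hh \<in> borel_measurable M" unfolding hh_def using H_meas hH by blast
  have pm[measurable]: "p \<in> borel_measurable M" unfolding p_def sigmoid_def by measurable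
  have ym[measurable]: "y \<in> borel_measurable M" unfolding y_def
    by (rule measurable_compose[OF Y_meas]) simp
  have gm: "g \<in> borel_measurable borel" unfolding gI
    by (intro borel_measurable_indicator real_interval_borel_measurable I)
  have gpm[measurable]: "(\<lambda>z. g (p z)) \<in> borel_measurable M"
    using measurable_compose[OF pm gm] by (simp add: comp_def)
  have um[measurable]: "u \<in> borel_measurable M" unfolding u_def
    using hhm gpm unfolding hh_def by measurable
  have bnd: "integrable M f" if "f \<in> borel_measurable M" "\<And>z. \<bar>f z\<bar> \<le> c" for f :: "_ \<Rightarrow> real" and c
    using that by (intro integrable_const_bound[where B=c]) auto
  have uyp_le: "\<bar>u z * (y z - p z)\<bar> \<le> u z" for z
  proof -
    have "\<bar>y z - p z\<bar> \<le> 1" using y01[of z] p01[of z] by auto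
    then show ?thesis using u01[of z] by (auto simp: abs_mult)
  qed
  have int_u: "integrable M u"
  proof (rule bnd[of _ 1])
    fix z show "\<bar>u z\<bar> \<le> 1" using u01[of z] by auto
  qed simp
  have int_uyp: "integrable M (\<lambda>z. u z * (y z - p z))"
  proof (rule bnd[of _ 1])
    fix z show "\<bar>u z * (y z - p z)\<bar> \<le> 1" using uyp_le[of z] u01[of z] by auto
  qed simp
  have int_hh: "integrable M hh"
  proof (rule bnd[of _ 1])
    fix z show "\<bar>hh z\<bar> \<le> 1" using hh01[of z] by auto
  qed simp
  have int_D: "integrable M (\<lambda>z. hh z * (p z * (1 - p z)))"
  proof (rule bnd[of _ 1])
    fix z show "\<bar>hh z * (p z * (1 - p z))\<bar> \<le> 1"
      using hh01[of z] p01[of z] by (auto simp: abs_mult intro!: mult_le_one)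
  qed simp
  define A where "A = (\<integral>z. u z * (y z - p z) \<partial>M)"
  define B where "B = (\<integral>z. u z \<partial>M)"
  define D where "D = (\<integral>z. hh z * (p z * (1 - p z)) \<partial>M)"
  define Eh where "Eh = (\<integral>z. hh z \<partial>M)"
  have Eh_pos: "Eh > 0" unfolding Eh_def hh_def using H_pos hH by blast
  have V': "\<bar>A\<bar> \<ge> \<alpha> * sqrt D"
    using V unfolding A_def D_def u_def p_def y_def hh_def by (simp add: mult.assoc)
  have D_pos: "D > 0"
  proof -
    have nn: "AE z in M. 0 \<le> hh z * (p z * (1 - p z))"
    proof (intro AE_I2)
      fix z show "0 \<le> hh z * (p z * (1 - p z))"
        using hh01[of z] p01[of z] by (intro mult_nonneg_nonneg) auto
    qed
    have "D \<ge> 0" unfolding D_def using nn by (intro integral_nonneg_AE) auto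
    moreover have "D \<noteq> 0"
    proof
      assume "D = 0"
      then have "AE z in M. hh z * (p z * (1 - p z)) = 0"
        using integral_nonneg_eq_0_iff_AE[OF int_D nn] unfolding D_def by simp
      then have "AE z in M. hh z = 0"
      proof (rule AE_mp, intro AE_I2 impI)
        fix z assume "hh z * (p z * (1 - p z)) = 0"
        then show "hh z = 0" using p01[of z] by (simp add: mult_eq_0_iff)
      qed
      then have "Eh = (\<integral>z. 0 \<partial>M)" unfolding Eh_def by (intro integral_cong_AE) auto
      with Eh_pos show False by simp
    qed
    ultimately show ?thesis by simp
  qed
  have ratio: "B / D \<le> C\<^sup>2"
  proof -
    have "cond_exp_on M h (\<lambda>z. g (sigmoid (F (fst z))))
          / cond_exp_on M h (\<lambda>z. sigmoid (F (fst z)) * (1 - sigmoid (F (fst z)))) \<le> C\<^sup>2"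
      using C_max hH gG by blast
    moreover have "cond_exp_on M h (\<lambda>z. g (sigmoid (F (fst z))))
          / cond_exp_on M h (\<lambda>z. sigmoid (F (fst z)) * (1 - sigmoid (F (fst z)))) = (B / Eh) / (D / Eh)"
      unfolding cond_exp_on_def B_def D_def Eh_def u_def hh_def p_def by simp
    moreover have "(B / Eh) / (D / Eh) = B / D" using Eh_pos by simp
    ultimately show ?thesis by linarith
  qed
  have sum_eq: "(\<Sum>j<K. (if j = k then c else 0) * hk j (fst z, sigmoid (F (fst z)))) = c * u z" for c z
  proof -
    have "(\<Sum>j<K. (if j = k then c else 0) * hk j (fst z, sigmoid (F (fst z))))
        = (\<Sum>j<K. if j = k then c * hk k (fst z, sigmoid (F (fst z))) else 0)"
      by (intro sum.cong) auto
    also have "\<dots> = c * hk k (fst z, sigmoid (F (fst z)))" using kK by simp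
    also have "\<dots> = c * u z" using hk_eq p01[of z] unfolding u_def p_def by simp
    finally show ?thesis .
  qed
  show ?thesis
  proof (cases "A = 0")
    case True
    then have "\<alpha> * sqrt D \<le> 0" using V' by simp
    with D_pos \<alpha>_nonneg have a0: "\<alpha> = 0" by (simp add: mult_le_0_iff)
    show ?thesis
      by (rule exI[where x="\<lambda>_. 0"]) (use loss_int a0 in simp)
  next
    case False
    have "\<bar>A\<bar> \<le> B"
    proof -
      have "\<bar>A\<bar> \<le> (\<integral>z. norm (u z * (y z - p z)) \<partial>M)"
        unfolding A_def using integral_norm_bound[of M "\<lambda>z. u z * (y z - p z)"] by simp
      also have "\<dots> \<le> B" unfolding B_def
        using int_uyp int_u uyp_le by (intro integral_mono) auto
      finally show ?thesis .
    qed
    with False have B_pos: "B > 0" by linarith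
    define \<eta> where "\<eta> = 4 * A / B"
    define Ol where "Ol = (\<lambda>z. logloss (F (fst z)) (y z))"
    define N where "N = (\<lambda>z. logloss (F (fst z) + \<eta> * u z) (y z))"
    have Om: "integrable M Ol" using loss_int unfolding Ol_def y_def by simp
    have Nle: "N z \<le> Ol z - \<eta> * (u z * (y z - p z)) + \<eta>\<^sup>2 / 8 * u z" for z
    proof -
      have le1: "N z \<le> Ol z - \<eta> * u z * (y z - sigmoid (F (fst z))) + (\<eta> * u z)\<^sup>2 / 8"
        unfolding N_def Ol_def by (rule logloss_bound[OF y01])
      have uu: "(u z)\<^sup>2 = u z" using u01[of z] by auto
      have "(\<eta> * u z)\<^sup>2 = \<eta>\<^sup>2 * u z" using uu by (simp add: power_mult_distrib)
      have "(\<eta> * u z)\<^sup>2 / 8 = \<eta>\<^sup>2 / 8 * u z" using \<open>(\<eta> * u z)\<^sup>2 = \<eta>\<^sup>2 * u z\<close> by simp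
      moreover have "\<eta> * u z * (y z - sigmoid (F (fst z))) = \<eta> * (u z * (y z - p z))"
        by (simp add: p_def)
      ultimately show ?thesis using le1 by linarith
    qed
    have N_nn: "0 \<le> N z" for z unfolding N_def by (rule logloss_nonneg[OF y01])
    have O_nn: "0 \<le> Ol z" for z unfolding Ol_def by (rule logloss_nonneg[OF y01])
    have Nm: "N \<in> borel_measurable M" unfolding N_def logloss_def sigmoid_def by measurable
    have intN: "integrable M N"
    proof (rule Bochner_Integration.integrable_bound[OF _ Nm])
      show "integrable M (\<lambda>z. Ol z + (\<bar>\<eta>\<bar> + \<eta>\<^sup>2 / 8))" using Om by simp
      show "AE z in M. norm (N z) \<le> norm (Ol z + (\<bar>\<eta>\<bar> + \<eta>\<^sup>2 / 8))"
      proof (intro AE_I2)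
        fix z
        have a: "- \<eta> * (u z * (y z - p z)) \<le> \<bar>\<eta>\<bar>"
        proof -
          have "\<bar>u z * (y z - p z)\<bar> \<le> 1" using uyp_le[of z] u01[of z] by auto
          then have "\<bar>\<eta> * (u z * (y z - p z))\<bar> \<le> \<bar>\<eta>\<bar>"
            by (simp add: abs_mult mult_left_le)
          then show ?thesis by linarith
        qed
        have b: "\<eta>\<^sup>2 / 8 * u z \<le> \<eta>\<^sup>2 / 8" using u01[of z] by auto
        show "norm (N z) \<le> norm (Ol z + (\<bar>\<eta>\<bar> + \<eta>\<^sup>2 / 8))"
          using Nle[of z] a b N_nn[of z] O_nn[of z] by simp
      qed
    qed
    have intR: "integrable M (\<lambda>z. Ol z - \<eta> * (u z * (y z - p z)) + \<eta>\<^sup>2 / 8 * u z)"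
      using Om int_uyp int_u by simp
    have "(\<integral>z. N z \<partial>M) \<le> (\<integral>z. Ol z - \<eta> * (u z * (y z - p z)) + \<eta>\<^sup>2 / 8 * u z \<partial>M)"
      using intN intR Nle by (intro integral_mono) auto
    also have "\<dots> = (\<integral>z. Ol z \<partial>M) - \<eta> * A + \<eta>\<^sup>2 / 8 * B"
      unfolding A_def B_def using Om int_uyp int_u by simp
    finally have Nint: "(\<integral>z. N z \<partial>M) \<le> (\<integral>z. Ol z \<partial>M) - \<eta> * A + \<eta>\<^sup>2 / 8 * B" .
    define Im where "Im = (\<integral>z. Ol z \<partial>M) - (\<integral>z. N z \<partial>M)"
    have "\<eta> * A - \<eta>\<^sup>2 / 8 * B = 2 * A\<^sup>2 / B"
      unfolding \<eta>_def using B_pos by (simp add: field_simps power2_eq_square)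
    with Nint have Im_ge: "2 * A\<^sup>2 / B \<le> Im" unfolding Im_def by linarith
    have Im_nn: "0 \<le> Im" using Im_ge B_pos by (smt (verit) divide_nonneg_pos zero_le_power2)
    have A2: "A\<^sup>2 \<le> Im * B / 2" using Im_ge B_pos by (simp add: field_simps)
    have a2D: "\<alpha>\<^sup>2 * D \<le> A\<^sup>2"
    proof -
      have "(\<alpha> * sqrt D)\<^sup>2 \<le> \<bar>A\<bar>\<^sup>2"
        using V' \<alpha>_nonneg D_pos by (intro power_mono) auto
      then show ?thesis using D_pos by (simp add: power_mult_distrib)
    qed
    have "\<alpha>\<^sup>2 \<le> A\<^sup>2 / D" using a2D D_pos by (simp add: field_simps)
    also have "\<dots> \<le> (Im * B / 2) / D" using A2 D_pos by (intro divide_right_mono) auto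
    also have "\<dots> = Im / 2 * (B / D)" by simp
    also have "\<dots> \<le> Im / 2 * C\<^sup>2" using ratio Im_nn by (intro mult_left_mono) auto
    also have "\<dots> \<le> (2 / sqrt 3 * C * sqrt Im)\<^sup>2"
      using Im_nn by (simp add: power_mult_distrib power_divide)
    finally have fin: "\<alpha>\<^sup>2 \<le> (2 / sqrt 3 * C * sqrt Im)\<^sup>2" .
    have "\<alpha> \<le> 2 / sqrt 3 * C * sqrt Im"
      by (rule power2_le_imp_le[OF fin]) (use C_nonneg Im_nn in simp)
    show ?thesis
    proof (rule exI[where x="\<lambda>j. if j = k then \<eta> else 0"], intro conjI)
      show "integrable M (\<lambda>z. logloss (F (fst z) + (\<Sum>j<K. (if j = k then \<eta> else 0) * hk j (fst z, sigmoid (F (fst z)))))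
                               (of_bool (snd z)))"
        using intN unfolding sum_eq N_def y_def .
      show "\<alpha> \<le> 2 / sqrt 3 * C *
       sqrt ((\<integral>z. logloss (F (fst z)) (of_bool (snd z)) \<partial>M)
           - (\<integral>z. logloss (F (fst z) + (\<Sum>j<K. (if j = k then \<eta> else 0) * hk j (fst z, sigmoid (F (fst z)))))
                          (of_bool (snd z)) \<partial>M))"
        using \<open>\<alpha> \<le> 2 / sqrt 3 * C * sqrt Im\<close> unfolding sum_eq Im_def N_def Ol_def y_def .
    qed
  qed
qed

end
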